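(* For every positive integer $n$, $D''_n\equiv 0\pmod 3$.
   Context: For $n\in\mathbb{N}$, the Domb numbers are $D_n=\sum_{k=0}^n\binom{n}{k}^2\binom{2k}{k}\binom{2(n-k)}{n-k}$. For a sequence $(x_k)_{k\ge0}$, its binomial transform is $x'_n=\sum_{k=0}^n\binom{n}{k}x_k$; $D'_n=\sum_{k=0}^n\binom nk D_k$ and $D''_n=\sum_{k=0}^n\binom{n}{k}D'_k$. *)

theory Defs
  imports Main
begin

definition domb :: "nat \<Rightarrow> nat" where
  "domb n = (\<Sum>k=0..n. (n choose k)^2 * ((2*k) choose k) * ((2*(n-k)) choose (n-k)))"

definition binom_transform :: "(nat \<Rightarrow> nat) \<Rightarrow> nat \<Rightarrow> nat" where
  "binom_transform x n = (\<Sum>k=0..n. (n choose k) * x k)"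

definition domb' :: "nat \<Rightarrow> nat" where
  "domb' = binom_transform domb"

definition domb'' :: "nat \<Rightarrow> nat" where
  "domb'' = binom_transform domb'"

end

theory Submission
  imports Defs
begin

lemma orbit3:
  fixes r :: "'a \<Rightarrow> 'a" and g :: "'a \<Rightarrow> nat"
  shows "finite A \<Longrightarrow> (\<forall>x\<in>A. r x \<in> A) \<Longrightarrow> (\<forall>x\<in>A. r (r (r x)) = x) \<Longrightarrow>
    (\<forall>x\<in>A. r x \<noteq> x) \<Longrightarrow> (\<forall>x\<in>A. g (r x) = g x) \<Longrightarrow> 3 dvd sum g A"
proof (induction "card A" arbitrary: A rule: less_induct)
  case less
  show ?case
  proof (cases "A = {}")
    case True thus ?thesis by simp
  next
    case False
    then obtain x where x: "x \<in> A" by auto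
    define Ob where "Ob = {x, r x, r (r x)}"
    have rx: "r x \<in> A" and rrx: "r (r x) \<in> A" using less.prems x by auto
    have Ob: "Ob \<subseteq> A" using x rx rrx Ob_def by auto
    have d1: "r x \<noteq> x" using less.prems x by auto
    have d3: "r (r x) \<noteq> r x" using less.prems rx by auto
    have d2: "r (r x) \<noteq> x"
    proof
      assume "r (r x) = x"
      then have "r (r (r x)) = r x" by simp
      then show False using less.prems x d1 by auto
    qed
    have g1: "g (r x) = g x" using less.prems x by auto
    have g2: "g (r (r x)) = g x" using less.prems rx g1 by auto
    have sO: "sum g Ob = 3 * g x"
      unfolding Ob_def using d1 d2 d3 g1 g2 by simp
    define B where "B = A - Ob"
    have fB: "finite B" using less.prems B_def by auto
    have cB: "card B < card A" using Ob x less.prems(1) B_def Ob_def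
      by (metis Diff_subset insertI1 psubsetI psubset_card_mono Diff_iff)
    have Binv: "\<forall>y\<in>B. r y \<in> B"
    proof
      fix y assume y: "y \<in> B"
      then have yA: "y \<in> A" "y \<notin> Ob" using B_def by auto
      have ry: "r y \<in> A" using less.prems yA by auto
      have "r y \<noteq> x"
      proof
        assume "r y = x"
        then have "r (r (r y)) = r (r x)" by simp
        then show False using less.prems yA Ob_def by auto
      qed
      moreover have "r y \<noteq> r x"
      proof
        assume "r y = r x"
        then have "r (r (r y)) = r (r (r x))" by simp
        then show False using less.prems yA x Ob_def by auto
      qed
      moreover have "r y \<noteq> r (r x)"
      proof
        assume "r y = r (r x)"
        then have "r (r (r y)) = r (r (r (r x)))" by simp
        then show False using less.prems yA rx Ob_def by auto
      qed
      ultimately show "r y \<in> B" using ry B_def Ob_def by auto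
    qed
    have "3 dvd sum g B"
      using less.hyps[OF cB fB] Binv less.prems B_def by auto
    moreover have "sum g A = sum g Ob + sum g B"
      using sum.subset_diff[OF Ob less.prems(1)] B_def by (simp add: add.commute)
    ultimately show ?thesis using sO by simp
  qed
qed

definition mult4 :: "nat \<Rightarrow> nat \<Rightarrow> nat \<Rightarrow> nat \<Rightarrow> nat" where
  "mult4 p q r s = fact (p+q+r+s) div (fact p * fact q * fact r * fact s)"

lemma mult4_eq:
  assumes "X * (fact p * fact q * fact r * fact s) = fact (p+q+r+s)"
  shows "mult4 p q r s = X"
  unfolding mult4_def using assms[symmetric] by simp

lemma mult4_cyc: "mult4 p q r s = mult4 p r s q"
  unfolding mult4_def by (simp add: ac_simps)

lemma key:
  assumes "k \<le> n" "i \<le> k" "j \<le> n - k"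
  shows "(n choose k) * (k choose i) * ((n-k) choose j) = mult4 i (k-i) j (n-k-j)"
proof (rule sym, rule mult4_eq)
  have a: "fact i * fact (k-i) * (k choose i) = fact k" using binomial_fact_lemma assms by blast
  have b: "fact j * fact (n-k-j) * ((n-k) choose j) = fact (n-k)" using binomial_fact_lemma assms by blast
  have c: "fact k * fact (n-k) * (n choose k) = fact n" using binomial_fact_lemma assms by blast
  have e: "i + (k-i) + j + (n-k-j) = n" using assms by simp
  have "(n choose k) * (k choose i) * ((n-k) choose j) * (fact i * fact (k - i) * fact j * fact (n - k - j))
     = (fact i * fact (k-i) * (k choose i)) * (fact j * fact (n-k-j) * ((n-k) choose j)) * (n choose k)"
    by (simp add: ac_simps)
  also have "\<dots> = fact n" using a b c by (simp add: ac_simps)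
  finally show "(n choose k) * (k choose i) * ((n-k) choose j) * (fact i * fact (k - i) * fact j * fact (n - k - j))
     = fact (i + (k - i) + j + (n - k - j))" using e by simp
qed

lemma fix_dvd:
  assumes "j > 0"
  shows "3 dvd mult4 i j j j"
proof -
  let ?n = "i + 3*j"
  have "mult4 i j j j = (?n choose i) * ((3*j) choose j) * ((2*j) choose j)"
  proof (rule mult4_eq)
    have a: "fact i * fact (?n - i) * (?n choose i) = fact ?n" using binomial_fact_lemma[of i ?n] by simp
    have b: "fact j * fact (3*j - j) * ((3*j) choose j) = fact (3*j)" using binomial_fact_lemma[of j "3*j"] by simp
    have c: "fact j * fact (2*j - j) * ((2*j) choose j) = fact (2*j)" using binomial_fact_lemma[of j "2*j"] by simp
    have b': "fact j * fact (2*j) * ((3*j) choose j) = fact (3*j)" using b by simp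
    have c': "fact j * fact j * ((2*j) choose j) = fact (2*j)" using c by simp
    have a': "fact i * fact (3*j) * (?n choose i) = fact ?n" using a by simp
    have "(?n choose i) * ((3*j) choose j) * ((2*j) choose j) * (fact i * fact j * fact j * fact j)
       = (fact i * (fact j * (fact j * fact j * ((2*j) choose j)) * ((3*j) choose j)) * (?n choose i))"
      by (simp add: ac_simps)
    also have "\<dots> = fact ?n" using a' b' c' by simp
    finally show "(?n choose i) * ((3*j) choose j) * ((2*j) choose j) * (fact i * fact j * fact j * fact j)
       = fact (i + j + j + j)" by (simp add: ac_simps mult_2 numeral_3_eq_3)
  qed
  moreover have "3 dvd ((3*j) choose j)"
  proof -
    have "j * ((3*j) choose j) = (3*j) * ((3*j - 1) choose (j - 1))"
      using times_binomial_minus1_eq assms by blast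
    then have "(3*j) choose j = 3 * ((3*j - 1) choose (j - 1))" using assms by simp
    then show ?thesis by simp
  qed
  ultimately show ?thesis by simp
qed

lemma domb_mod: "domb n mod 3 = 1"
proof -
  define T where "T = Sigma {0..n} (\<lambda>k. Sigma {0..k} (\<lambda>i. {0..n-k}))"
  define g where "g = (\<lambda>(k::nat,i::nat,j::nat). ((n choose k) * (k choose i) * ((n-k) choose j))^2)"
  define r where "r = (\<lambda>(k::nat,i::nat,j::nat). (i+j, i, n-k-j))"
  have fT: "finite T" unfolding T_def by auto
  have "domb n = (\<Sum>k=0..n. \<Sum>i=0..k. \<Sum>j=0..n-k. ((n choose k) * (k choose i) * ((n-k) choose j))^2)"
  proof -
    have "\<And>k. (n choose k)^2 * ((2*k) choose k) * ((2*(n-k)) choose (n-k))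
       = (\<Sum>i=0..k. \<Sum>j=0..n-k. ((n choose k) * (k choose i) * ((n-k) choose j))^2)"
    proof -
      fix k
      have "(n choose k)^2 * ((2*k) choose k) * ((2*(n-k)) choose (n-k))
          = (n choose k)^2 * (\<Sum>i\<le>k. (k choose i)^2) * (\<Sum>j\<le>n-k. ((n-k) choose j)^2)"
        by (simp add: choose_square_sum)
      also have "\<dots> = (\<Sum>i\<le>k. \<Sum>j\<le>n-k. ((n choose k) * (k choose i) * ((n-k) choose j))^2)"
        by (simp add: sum_distrib_left sum_distrib_right power_mult_distrib ac_simps)
      finally show "(n choose k)^2 * ((2*k) choose k) * ((2*(n-k)) choose (n-k))
       = (\<Sum>i=0..k. \<Sum>j=0..n-k. ((n choose k) * (k choose i) * ((n-k) choose j))^2)"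
        by (simp add: atLeast0AtMost)
    qed
    then show ?thesis unfolding domb_def by simp
  qed
  also have "\<dots> = sum g T"
    unfolding T_def g_def by (simp add: sum.Sigma)
  finally have D: "domb n = sum g T" .
  have inT: "\<And>k i j. ((k,i,j) \<in> T) = (k \<le> n \<and> i \<le> k \<and> j \<le> n - k)"
    unfolding T_def by auto
  have rT: "\<forall>x\<in>T. r x \<in> T" unfolding r_def using inT by auto
  have r3: "\<forall>x\<in>T. r (r (r x)) = x" unfolding r_def using inT by auto
  have gr: "\<forall>x\<in>T. g (r x) = g x"
  proof
    fix x assume x: "x \<in> T"
    obtain k i j where xe: "x = (k,i,j)" by (cases x) auto
    have h: "k \<le> n" "i \<le> k" "j \<le> n - k" using x xe inT by auto
    have "g (r x) = ((n choose (i+j)) * ((i+j) choose i) * ((n-(i+j)) choose (n-k-j)))^2"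
      unfolding r_def g_def xe by simp
    also have "\<dots> = (mult4 i (i+j-i) (n-k-j) (n-(i+j)-(n-k-j)))^2"
      using key[of "i+j" n i "n-k-j"] h by simp
    also have "\<dots> = (mult4 i j (n-k-j) (k-i))^2"
      using h by (simp add: algebra_simps)
    also have "\<dots> = (mult4 i (k-i) j (n-k-j))^2" by (simp add: mult4_cyc)
    also have "\<dots> = g x" unfolding g_def xe using key[of k n i j] h by simp
    finally show "g (r x) = g x" .
  qed
  define F where "F = {x\<in>T. r x = x}"
  define N where "N = T - F"
  have "3 dvd sum g N"
  proof (rule orbit3[of N r g])
    show "finite N" using fT N_def by auto
    show "\<forall>x\<in>N. r x \<in> N"
    proof
      fix x assume x: "x \<in> N"
      have "r x \<noteq> r (r x)"
      proof
        assume "r x = r (r x)"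
        then have "r (r (r x)) = r x" by simp
        then show False using x r3 N_def F_def by auto
      qed
      then show "r x \<in> N" using x rT N_def F_def by auto
    qed
    show "\<forall>x\<in>N. r (r (r x)) = x" using r3 N_def by auto
    show "\<forall>x\<in>N. r x \<noteq> x" using N_def F_def by auto
    show "\<forall>x\<in>N. g (r x) = g x" using gr N_def by auto
  qed
  define x0 where "x0 = (n, n, 0::nat)"
  have x0F: "x0 \<in> F" unfolding x0_def F_def r_def using inT by auto
  have g0: "g x0 = 1" unfolding x0_def g_def by simp
  have "3 dvd sum g (F - {x0})"
  proof (rule dvd_sum)
    fix x assume x: "x \<in> F - {x0}"
    obtain k i j where xe: "x = (k,i,j)" by (cases x) auto
    have h: "k \<le> n" "i \<le> k" "j \<le> n - k" "i + j = k" "n - k - j = j"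
      using x xe inT F_def r_def by auto
    have j0: "j > 0"
    proof (rule ccontr)
      assume "\<not> j > 0"
      then have "j = 0" by simp
      then have "x = x0" using h xe x0_def by auto
      then show False using x by simp
    qed
    have "g x = (mult4 i (k-i) j (n-k-j))^2" unfolding g_def xe using key[of k n i j] h by simp
    also have "\<dots> = (mult4 i j j j)^2" using h by (metis add_diff_cancel_left')
    finally have "g x = (mult4 i j j j)^2" .
    moreover have "3 dvd mult4 i j j j" using fix_dvd j0 by simp
    ultimately show "3 dvd g x" by (simp add: power2_eq_square)
  qed
  moreover have "sum g F = g x0 + sum g (F - {x0})"
    using x0F fT F_def by (simp add: sum.remove)
  moreover have "sum g T = sum g F + sum g N"
    using sum.subset_diff[of F T g] fT F_def N_def by (auto simp: add.commute)
  ultimately have E: "domb n = 1 + (sum g (F - {x0}) + sum g N)" using D g0 by simp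
  obtain a where a: "sum g (F - {x0}) = 3 * a" using \<open>3 dvd sum g (F - {x0})\<close> by blast
  obtain b where b: "sum g N = 3 * b" using \<open>3 dvd sum g N\<close> by blast
  have "domb n = 1 + 3 * (a + b)" using E a b by simp
  then show ?thesis by simp
qed

theorem lemma3p4:
  fixes n :: nat
  assumes "n > 0"
  shows "domb'' n mod 3 = 0"
proof -
  have d1: "domb' m mod 3 = 2^m mod 3" for m
  proof -
    have "domb' m mod 3 = (\<Sum>k=0..m. (m choose k) * domb k mod 3) mod 3"
      unfolding domb'_def binom_transform_def by (simp add: mod_sum_eq)
    also have "\<dots> = (\<Sum>k=0..m. (m choose k) mod 3) mod 3"
      by (simp add: mod_mult_right_eq[of _ "domb _", symmetric] domb_mod)
    also have "\<dots> = (\<Sum>k=0..m. (m choose k)) mod 3" by (simp add: mod_sum_eq)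
    also have "\<dots> = 2^m mod 3" using choose_row_sum by (simp add: atLeast0AtMost)
    finally show ?thesis .
  qed
  have "domb'' n mod 3 = (\<Sum>k=0..n. (n choose k) * domb' k mod 3) mod 3"
    unfolding domb''_def binom_transform_def by (simp add: mod_sum_eq)
  also have "\<dots> = (\<Sum>k=0..n. (n choose k) * 2^k mod 3) mod 3"
    by (simp add: mod_mult_right_eq[of _ "domb' _", symmetric] mod_mult_right_eq[of _ "2^_", symmetric] d1)
  also have "\<dots> = (\<Sum>k=0..n. (n choose k) * 2^k) mod 3" by (simp add: mod_sum_eq)
  also have "\<dots> = (2+1)^n mod 3"
    using binomial_ring[of "2::nat" 1 n] by (simp add: atLeast0AtMost)
  also have "\<dots> = 0" using assms by simp
  finally show ?thesis .
qed

end
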